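(* Let $G$ be a graph of the form $G=B\cup G_1\cup\cdots\cup G_m$ with $m\ge 2$, where $B,G_1,\dots,G_m$ are subgraphs, the graphs $G_1,\dots,G_m$ are pairwise vertex-disjoint, and each $G_i$ shares exactly one vertex $x_i$ with $B$. Let $p$ be an integer such that $\mathrm{pw}(G_i;x_i)\le p$ for all $i\in\{2,\dots,m\}$. Then for every $x\in V(B)$, $$\mathrm{pw}(G;x)\le \max\{\mathrm{pw}(B;x_1)+p+1,\ \mathrm{pw}(G_1;x_1)\}.$$
   Context: A path-decomposition of $G$ is a sequence $(X_0,\dots,X_s)$ of subsets of $V(G)$ such that for each vertex $v$ the indices $i$ with $v\in X_i$ form a non-empty interval, and each edge has both ends in some $X_i$; its width is $\max_i|X_i|-1$. For $x\in V(G)$, $\mathrm{pw}(G;x)$ denotes the minimum width of a path-decomposition $(X_0,\dots,X_s)$ of $G$ with $x\in X_0$. *)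

theory Defs
  imports Main
begin

type_synonym 'a graph = "'a set \<times> 'a set set"

definition verts :: "'a graph \<Rightarrow> 'a set" where "verts G = fst G"
definition edges :: "'a graph \<Rightarrow> 'a set set" where "edges G = snd G"

definition is_graph :: "'a graph \<Rightarrow> bool" where
  "is_graph G \<longleftrightarrow> finite (verts G) \<and>
     (\<forall>e\<in>edges G. e \<subseteq> verts G \<and> card e = 2)"

definition is_path_decomp :: "'a graph \<Rightarrow> 'a set list \<Rightarrow> bool" where
  "is_path_decomp G Xs \<longleftrightarrow> Xs \<noteq> [] \<and>
     (\<forall>i<length Xs. Xs ! i \<subseteq> verts G) \<and>
     (\<forall>v\<in>verts G. (\<exists>i<length Xs. v \<in> Xs ! i) \<and>
        (\<forall>i j k. i \<le> j \<and> j \<le> k \<and> k < length Xs \<and> v \<in> Xs ! i \<and> v \<in> Xs ! k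
                 \<longrightarrow> v \<in> Xs ! j)) \<and>
     (\<forall>e\<in>edges G. \<exists>i<length Xs. e \<subseteq> Xs ! i)"

definition pd_width :: "'a set list \<Rightarrow> int" where
  "pd_width Xs = int (Max (card ` set Xs)) - 1"

definition pw_rooted :: "'a graph \<Rightarrow> 'a \<Rightarrow> int" where
  "pw_rooted G x = (LEAST w. \<exists>Xs. is_path_decomp G Xs \<and> x \<in> hd Xs \<and> pd_width Xs = w)"

definition graph_union :: "'a graph \<Rightarrow> 'a graph \<Rightarrow> 'a graph" where
  "graph_union G H = (verts G \<union> verts H, edges G \<union> edges H)"

definition graph_Union :: "'a graph set \<Rightarrow> 'a graph" where
  "graph_Union S = (\<Union>H\<in>S. verts H, \<Union>H\<in>S. edges H)"

end

theory Submission imports Defs begin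

definition conn :: "'a set list \<Rightarrow> bool" where
 "conn Xs \<longleftrightarrow> (\<forall>v i j k. i \<le> j \<and> j \<le> k \<and> k < length Xs \<and> v \<in> Xs!i \<and> v \<in> Xs!k \<longrightarrow> v \<in> Xs!j)"

lemma connD: "conn Xs \<Longrightarrow> i \<le> j \<Longrightarrow> j \<le> k \<Longrightarrow> k < length Xs \<Longrightarrow> v \<in> Xs!i \<Longrightarrow> v \<in> Xs!k \<Longrightarrow> v \<in> Xs!j"
  unfolding conn_def by blast

lemma pd_iff: "is_path_decomp G Xs \<longleftrightarrow> Xs \<noteq> [] \<and> \<Union>(set Xs) = verts G \<and> conn Xs \<and> (\<forall>e\<in>edges G. \<exists>X\<in>set Xs. e \<subseteq> X)"
proof -
  have 1: "(\<forall>i<length Xs. Xs!i \<subseteq> verts G) \<longleftrightarrow> (\<forall>X\<in>set Xs. X \<subseteq> verts G)"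
    by (simp add: all_set_conv_all_nth)
  have 2: "(\<exists>i<length Xs. e \<subseteq> Xs!i) \<longleftrightarrow> (\<exists>X\<in>set Xs. e \<subseteq> X)" for e
    by (metis in_set_conv_nth)
  have 3: "(\<exists>i<length Xs. v \<in> Xs!i) \<longleftrightarrow> v \<in> \<Union>(set Xs)" for v
    by (metis UnionE UnionI in_set_conv_nth)
  have eq: "is_path_decomp G Xs \<longleftrightarrow> Xs \<noteq> [] \<and> (\<forall>X\<in>set Xs. X \<subseteq> verts G) \<and> (\<forall>v\<in>verts G. v \<in> \<Union>(set Xs)) \<and>
     (\<forall>v\<in>verts G. \<forall>i j k. i \<le> j \<and> j \<le> k \<and> k < length Xs \<and> v \<in> Xs ! i \<and> v \<in> Xs ! k \<longrightarrow> v \<in> Xs ! j) \<and>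
     (\<forall>e\<in>edges G. \<exists>X\<in>set Xs. e \<subseteq> X)"
    unfolding is_path_decomp_def 1 2 3 ball_conj_distrib conj_assoc by (rule refl)
  have 4: "(\<forall>v\<in>verts G. \<forall>i j k. i \<le> j \<and> j \<le> k \<and> k < length Xs \<and> v \<in> Xs ! i \<and> v \<in> Xs ! k \<longrightarrow> v \<in> Xs ! j) \<longleftrightarrow> conn Xs"
    if h: "\<forall>X\<in>set Xs. X \<subseteq> verts G"
  proof
    assume a: "\<forall>v\<in>verts G. \<forall>i j k. i \<le> j \<and> j \<le> k \<and> k < length Xs \<and> v \<in> Xs ! i \<and> v \<in> Xs ! k \<longrightarrow> v \<in> Xs ! j"
    show "conn Xs" unfolding conn_def
    proof (intro allI impI)
      fix v i j k assume b: "i \<le> j \<and> j \<le> k \<and> k < length Xs \<and> v \<in> Xs ! i \<and> v \<in> Xs ! k"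
      then have "Xs!i \<in> set Xs" by simp
      then have "v \<in> verts G" using h b by blast
      then show "v \<in> Xs!j" using a b by blast
    qed
  next
    assume "conn Xs" then show "\<forall>v\<in>verts G. \<forall>i j k. i \<le> j \<and> j \<le> k \<and> k < length Xs \<and> v \<in> Xs ! i \<and> v \<in> Xs ! k \<longrightarrow> v \<in> Xs ! j"
      unfolding conn_def by blast
  qed
  show ?thesis
  proof (cases "\<forall>X\<in>set Xs. X \<subseteq> verts G")
    case True
    have "\<Union>(set Xs) = verts G \<longleftrightarrow> (\<forall>v\<in>verts G. v \<in> \<Union>(set Xs))" using True by blast
    then show ?thesis unfolding eq 4[OF True] using True by simp
  next
    case False
    then show ?thesis unfolding eq by blast
  qed
qed

lemma conn_append:
  assumes "conn Xs" "conn Ys" "Xs \<noteq> []" "Ys \<noteq> []" "\<Union>(set Xs) \<inter> \<Union>(set Ys) \<subseteq> last Xs \<inter> hd Ys"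
  shows "conn (Xs @ Ys)"
  unfolding conn_def
proof (intro allI impI)
  fix v i j k assume h: "i \<le> j \<and> j \<le> k \<and> k < length (Xs @ Ys) \<and> v \<in> (Xs @ Ys) ! i \<and> v \<in> (Xs @ Ys) ! k"
  define n where "n = length Xs"
  have n0: "n > 0" using assms(3) n_def by simp
  show "v \<in> (Xs @ Ys) ! j"
  proof (cases "k < n")
    case True
    have a: "v \<in> Xs!i" "v \<in> Xs!k" using h True n_def by (auto simp: nth_append)
    have "v \<in> Xs!j" by (rule connD[OF assms(1) _ _ _ a(1) a(2)]) (use h True n_def in auto)
    then show ?thesis using h True n_def by (auto simp: nth_append)
  next
    case kn: False
    show ?thesis
    proof (cases "i \<ge> n")
      case True
      have a: "v \<in> Ys!(i-n)" "v \<in> Ys!(k-n)" using h True kn n_def by (auto simp: nth_append)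
      have b: "k - n < length Ys" using h kn n_def by auto
      have "v \<in> Ys!(j-n)" by (rule connD[OF assms(2) _ _ b a(1) a(2)]) (use h in auto)
      then show ?thesis using h True n_def by (auto simp: nth_append)
    next
      case False
      have vi: "v \<in> Xs!i" using h False n_def by (auto simp: nth_append)
      have vk: "v \<in> Ys!(k-n)" using h kn n_def by (auto simp: nth_append)
      have "k - n < length Ys" using h kn n_def by auto
      have "v \<in> \<Union>(set Xs)" using vi False n_def by auto
      moreover have "v \<in> \<Union>(set Ys)" using vk \<open>k - n < length Ys\<close> by auto
      ultimately have vl: "v \<in> last Xs" and vh: "v \<in> hd Ys" using assms(5) by auto
      have lx: "last Xs = Xs!(n-1)" using assms(3) n_def by (simp add: last_conv_nth)
      have hy: "hd Ys = Ys!0" using assms(4) by (simp add: hd_conv_nth)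
      show ?thesis
      proof (cases "j < n")
        case True
        have "v \<in> Xs!j" by (rule connD[OF assms(1), of i _ "n-1"]) (use vi vl lx h True False n0 n_def in auto)
        then show ?thesis using True n_def by (auto simp: nth_append)
      next
        case jn: False
        have "v \<in> Ys!(j-n)" by (rule connD[OF assms(2), of 0 _ "k-n"]) (use vh hy vk h jn \<open>k - n < length Ys\<close> in auto)
        then show ?thesis using jn n_def by (auto simp: nth_append)
      qed
    qed
  qed
qed

lemma conn_sep:
  assumes "conn (Xs @ Ys)" "Xs \<noteq> []" "Ys \<noteq> []"
  shows "\<Union>(set Xs) \<inter> \<Union>(set Ys) \<subseteq> last Xs \<inter> hd Ys"
proof
  fix v assume "v \<in> \<Union>(set Xs) \<inter> \<Union>(set Ys)"
  then obtain i k where i: "i < length Xs" "v \<in> Xs!i" and k: "k < length Ys" "v \<in> Ys!k"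
    by (auto simp: in_set_conv_nth)
  define n where "n = length Xs"
  have a: "v \<in> (Xs@Ys)!i" using i by (simp add: nth_append)
  have b: "v \<in> (Xs@Ys)!(n+k)" using k n_def by (simp add: nth_append)
  have c: "n + k < length (Xs@Ys)" using k n_def by simp
  have cc: "\<And>v i j k. i \<le> j \<Longrightarrow> j \<le> k \<Longrightarrow> k < length (Xs@Ys) \<Longrightarrow> v \<in> (Xs@Ys)!i \<Longrightarrow> v \<in> (Xs@Ys)!k \<Longrightarrow> v \<in> (Xs@Ys)!j"
    using assms(1) unfolding conn_def by blast
  have "v \<in> (Xs@Ys)!(n-1)" by (rule cc[OF _ _ c a b]) (use i n_def in auto)
  moreover have "v \<in> (Xs@Ys)!n" by (rule cc[OF _ _ c a b]) (use i n_def in auto)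
  ultimately show "v \<in> last Xs \<inter> hd Ys" using assms n_def
    by (simp add: nth_append last_conv_nth hd_conv_nth)
qed

lemma conn_appendD:
  assumes "conn (Xs @ Ys)" shows "conn Xs" "conn Ys"
proof -
  show "conn Xs" unfolding conn_def
  proof (intro allI impI)
    fix v i j k assume h: "i \<le> j \<and> j \<le> k \<and> k < length Xs \<and> v \<in> Xs ! i \<and> v \<in> Xs ! k"
    have "v \<in> (Xs@Ys)!j" by (rule connD[OF assms, of i _ k]) (use h in \<open>auto simp: nth_append\<close>)
    then show "v \<in> Xs!j" using h by (simp add: nth_append)
  qed
  show "conn Ys" unfolding conn_def
  proof (intro allI impI)
    fix v i j k assume h: "i \<le> j \<and> j \<le> k \<and> k < length Ys \<and> v \<in> Ys ! i \<and> v \<in> Ys ! k"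
    have "v \<in> (Xs@Ys)!(length Xs + j)" by (rule connD[OF assms, of "length Xs + i" _ "length Xs + k"]) (use h in \<open>auto simp: nth_append\<close>)
    then show "v \<in> Ys!j" by simp
  qed
qed

lemma conn_rev: "conn Xs \<Longrightarrow> conn (rev Xs)"
  unfolding conn_def[of "rev Xs"]
proof (intro allI impI)
  fix v i j k assume c: "conn Xs"
    and h: "i \<le> j \<and> j \<le> k \<and> k < length (rev Xs) \<and> v \<in> rev Xs ! i \<and> v \<in> rev Xs ! k"
  let ?n = "length Xs"
  have a: "v \<in> Xs!(?n - Suc i)" "v \<in> Xs!(?n - Suc k)" using h by (auto simp: rev_nth)
  have b: "?n - Suc k \<le> ?n - Suc j" "?n - Suc j \<le> ?n - Suc i" "?n - Suc i < ?n" using h by auto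
  have "v \<in> Xs!(?n - Suc j)" by (rule connD[OF c b a(2) a(1)])
  then show "v \<in> rev Xs ! j" using h by (auto simp: rev_nth)
qed

lemma conn_map_Un: "conn Xs \<Longrightarrow> conn (map (\<lambda>Z. S \<union> Z) Xs)"
  unfolding conn_def[of "map _ _"]
proof (intro allI impI)
  fix v i j k assume c: "conn Xs"
    and h: "i \<le> j \<and> j \<le> k \<and> k < length (map (\<lambda>Z. S \<union> Z) Xs) \<and> v \<in> map (\<lambda>Z. S \<union> Z) Xs ! i \<and> v \<in> map (\<lambda>Z. S \<union> Z) Xs ! k"
  have lens: "i < length Xs" "j < length Xs" "k < length Xs" "i \<le> j" "j \<le> k" using h by auto
  show "v \<in> map (\<lambda>Z. S \<union> Z) Xs ! j"
  proof (cases "v \<in> S")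
    case True then show ?thesis using lens by simp
  next
    case False
    then have a: "v \<in> Xs!i" "v \<in> Xs!k" using h lens by auto
    have "v \<in> Xs!j" by (rule connD[OF c lens(4) lens(5) lens(3) a(1) a(2)])
    then show ?thesis using lens by simp
  qed
qed


lemma Union_map_Un: "Zs \<noteq> [] \<Longrightarrow> \<Union>(set (map (\<lambda>Z. S \<union> Z) Zs)) = S \<union> \<Union>(set Zs)"
  by (induction Zs) auto

lemma insert_conn:
  assumes "conn (A @ C)" "C \<noteq> []" "conn Zs" "Zs \<noteq> []"
    "S \<subseteq> hd C" "A \<noteq> [] \<Longrightarrow> S = last A \<inter> hd C"
    "\<Union>(set A) \<inter> \<Union>(set Zs) = {}"
    "\<Union>(set Zs) \<inter> \<Union>(set C) \<subseteq> hd Zs \<inter> hd C"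
  shows "conn (A @ map (\<lambda>Z. S \<union> Z) (rev Zs) @ C)"
proof -
  define M where "M = map (\<lambda>Z. S \<union> Z) (rev Zs)"
  have M0: "M \<noteq> []" using assms(4) M_def by simp
  have cM: "conn M" unfolding M_def by (rule conn_map_Un[OF conn_rev[OF assms(3)]])
  have UM: "\<Union>(set M) = S \<union> \<Union>(set Zs)" unfolding M_def using Union_map_Un[of "rev Zs" S] assms(4) by simp
  have lM: "last M = S \<union> hd Zs" unfolding M_def using assms(4) by (simp add: last_map last_rev)
  have hM: "hd M = S \<union> last Zs" unfolding M_def using assms(4) by (simp add: hd_map hd_rev)
  have cC: "conn C" using conn_appendD(2)[OF assms(1)] .
  have "\<Union>(set M) \<inter> \<Union>(set C) \<subseteq> last M \<inter> hd C" unfolding UM lM using assms(5,8) by blast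
  then have cMC: "conn (M @ C)" by (rule conn_append[OF cM cC M0 assms(2)])
  show ?thesis
  proof (cases "A = []")
    case True then show ?thesis using cMC M_def by simp
  next
    case False
    have cA: "conn A" using conn_appendD(1)[OF assms(1)] .
    have S: "S = last A \<inter> hd C" using assms(6) False by simp
    have sep: "\<Union>(set A) \<inter> \<Union>(set C) \<subseteq> last A \<inter> hd C" by (rule conn_sep[OF assms(1) False assms(2)])
    have "hd (M @ C) = S \<union> last Zs" using hM M0 by simp
    moreover have "\<Union>(set (M @ C)) = S \<union> \<Union>(set Zs) \<union> \<Union>(set C)" using UM by simp
    ultimately have "\<Union>(set A) \<inter> \<Union>(set (M @ C)) \<subseteq> last A \<inter> hd (M @ C)"
      using S sep assms(7) by blast
    from conn_append[OF cA cMC False _ this] M0 have "conn (A @ (M @ C))" by simp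
    then show ?thesis using M_def by simp
  qed
qed

fun goodr :: "'a set \<Rightarrow> 'a set \<Rightarrow> nat \<Rightarrow> 'a set list \<Rightarrow> bool" where
  "goodr Vs P K [] = True"
| "goodr Vs P K (X # L) = (((X - P) \<inter> Vs \<noteq> {} \<longrightarrow> card X \<le> K) \<and> goodr Vs X K L)"

lemma goodr_append: "goodr Vs P K (A @ B) \<longleftrightarrow> goodr Vs P K A \<and> goodr Vs (if A = [] then P else last A) K B"
  by (induction A arbitrary: P) auto

lemma goodr_all: "\<forall>X\<in>set L. card X \<le> K \<Longrightarrow> goodr Vs P K L"
  by (induction L arbitrary: P) auto

lemma goodr_mapUn: "(S - P) \<inter> Vs = {} \<Longrightarrow> \<forall>Z\<in>set Zs. Z \<inter> Vs = {} \<Longrightarrow> goodr Vs P K (map (\<lambda>Z. S \<union> Z) Zs)"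
proof (induction Zs arbitrary: P)
  case Nil then show ?case by simp
next
  case (Cons Z Zs)
  have "(S \<union> Z - P) \<inter> Vs = {}" using Cons.prems by auto
  moreover have "goodr Vs (S \<union> Z) K (map (\<lambda>Z. S \<union> Z) Zs)" using Cons.IH[of "S \<union> Z"] Cons.prems by auto
  ultimately show ?case by simp
qed

lemma goodr_mono_Vs: "goodr Vs P K L \<Longrightarrow> Vs' \<subseteq> Vs \<Longrightarrow> goodr Vs' P K L"
proof (induction L arbitrary: P)
  case Nil then show ?case by simp
next
  case (Cons X L) then show ?case by auto
qed

lemma goodr_mono_hd: "goodr Vs P K (X # L) \<Longrightarrow> X \<inter> P \<subseteq> P' \<Longrightarrow> goodr Vs P' K (X # L)"
  by auto

lemma split_first: "v \<in> \<Union>(set L) \<Longrightarrow> \<exists>A C. L = A @ C \<and> C \<noteq> [] \<and> v \<in> hd C \<and> v \<notin> \<Union>(set A)"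
proof (induction L)
  case Nil then show ?case by simp
next
  case (Cons X L)
  show ?case
  proof (cases "v \<in> X")
    case True then show ?thesis by (intro exI[of _ "[]"] exI[of _ "X # L"]) simp
  next
    case False
    then obtain A C where "L = A @ C" "C \<noteq> []" "v \<in> hd C" "v \<notin> \<Union>(set A)" using Cons by auto
    then show ?thesis using False by (intro exI[of _ "X # A"] exI[of _ C]) simp
  qed
qed

lemma pd_width_le: "Xs \<noteq> [] \<Longrightarrow> \<forall>X\<in>set Xs. int (card X) \<le> K + 1 \<Longrightarrow> pd_width Xs \<le> K"
proof -
  assume a: "Xs \<noteq> []" "\<forall>X\<in>set Xs. int (card X) \<le> K + 1"
  have "Max (card ` set Xs) \<in> card ` set Xs" using a(1) by (intro Max_in) auto
  then obtain X where "X \<in> set Xs" "Max (card ` set Xs) = card X" by auto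
  then show ?thesis using a(2) unfolding pd_width_def by auto
qed

lemma pd_width_ge: "X \<in> set Xs \<Longrightarrow> int (card X) \<le> pd_width Xs + 1"
  unfolding pd_width_def by simp

lemma pw_opt:
  assumes "\<exists>Xs. is_path_decomp G Xs \<and> x \<in> hd Xs"
  shows "\<exists>Xs. is_path_decomp G Xs \<and> x \<in> hd Xs \<and> pd_width Xs = pw_rooted G x"
    and "\<And>Xs. is_path_decomp G Xs \<Longrightarrow> x \<in> hd Xs \<Longrightarrow> pw_rooted G x \<le> pd_width Xs"
proof -
  define P where "P w \<longleftrightarrow> (\<exists>Xs. is_path_decomp G Xs \<and> x \<in> hd Xs \<and> pd_width Xs = w)" for w
  have ge: "w \<ge> -1" if "P w" for w
    using that unfolding P_def pd_width_def by auto
  define Q where "Q n \<longleftrightarrow> P (int n - 1)" for n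
  obtain Xs0 where X0: "is_path_decomp G Xs0" "x \<in> hd Xs0" using assms by blast
  have P0: "P (pd_width Xs0)" unfolding P_def using X0 by blast
  have "Q (nat (pd_width Xs0 + 1))" unfolding Q_def using ge[OF P0] P0 by simp
  define n0 where "n0 = (LEAST n. Q n)"
  have Qn0: "Q n0" unfolding n0_def by (rule LeastI) fact
  have min: "int n0 - 1 \<le> w" if "P w" for w
  proof -
    have "Q (nat (w + 1))" unfolding Q_def using ge[OF that] that by simp
    then have "n0 \<le> nat (w+1)" unfolding n0_def by (rule Least_le)
    then show ?thesis using ge[OF that] by simp
  qed
  have eq: "pw_rooted G x = int n0 - 1"
    unfolding pw_rooted_def
    by (rule Least_equality) (use Qn0 min in \<open>auto simp: Q_def P_def\<close>)
  show "\<exists>Xs. is_path_decomp G Xs \<and> x \<in> hd Xs \<and> pd_width Xs = pw_rooted G x"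
    using Qn0 eq unfolding Q_def P_def by auto
  show "\<And>Xs. is_path_decomp G Xs \<Longrightarrow> x \<in> hd Xs \<Longrightarrow> pw_rooted G x \<le> pd_width Xs"
    using min eq unfolding P_def by auto
qed

theorem lemma3p3:
  fixes G B :: "'a graph" and Gs :: "nat \<Rightarrow> 'a graph" and xs :: "nat \<Rightarrow> 'a"
    and m :: nat and p :: int and x :: 'a
  assumes "m \<ge> 2"
    and "is_graph B"
    and "\<And>i. i \<in> {1..m} \<Longrightarrow> is_graph (Gs i)"
    and "G = graph_union B (graph_Union (Gs ` {1..m}))"
    and "\<And>i j. i \<in> {1..m} \<Longrightarrow> j \<in> {1..m} \<Longrightarrow> i \<noteq> j \<Longrightarrow>
           verts (Gs i) \<inter> verts (Gs j) = {}"
    and "\<And>i. i \<in> {1..m} \<Longrightarrow> verts (Gs i) \<inter> verts B = {xs i}"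
    and "\<And>i. i \<in> {2..m} \<Longrightarrow> pw_rooted (Gs i) (xs i) \<le> p"
    and "x \<in> verts B"
  shows "pw_rooted G x \<le> max (pw_rooted B (xs 1) + p + 1) (pw_rooted (Gs 1) (xs 1))"
proof -
  define VB where "VB = verts B"
  define EB where "EB = edges B"
  have finB: "finite VB" using assms(2) unfolding is_graph_def VB_def by blast
  have finG: "finite (verts (Gs i))" if "i \<in> {1..m}" for i
    using assms(3)[OF that] unfolding is_graph_def by blast
  have xsV: "xs i \<in> verts (Gs i)" "xs i \<in> VB" if "i \<in> {1..m}" for i
    using assms(6)[OF that] VB_def by auto
  have capB: "verts (Gs i) \<inter> VB = {xs i}" if "i \<in> {1..m}" for i
    using assms(6)[OF that] VB_def by auto
  have triv: "\<exists>Xs. is_path_decomp H Xs \<and> v \<in> hd Xs" if "is_graph H" "v \<in> verts H" for H v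
  proof -
    have "conn [verts H]" unfolding conn_def by auto
    then have "is_path_decomp H [verts H]" using that(1) unfolding pd_iff is_graph_def by auto
    then show ?thesis using that by auto
  qed
  have m1: "1 \<in> {1..m}" using assms(1) by simp
  obtain Y where Y: "is_path_decomp B Y" "xs 1 \<in> hd Y" "pd_width Y = pw_rooted B (xs 1)"
    using pw_opt(1)[OF triv[OF assms(2) xsV(2)[OF m1, unfolded VB_def]]] by blast
  obtain W where W: "is_path_decomp (Gs 1) W" "xs 1 \<in> hd W" "pd_width W = pw_rooted (Gs 1) (xs 1)"
    using pw_opt(1)[OF triv[OF assms(3)[OF m1] xsV(1)[OF m1]]] by blast
  have Zex: "\<exists>Zs. is_path_decomp (Gs i) Zs \<and> xs i \<in> hd Zs \<and> pd_width Zs \<le> p" if "i \<in> {2..m}" for i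
  proof -
    have i1: "i \<in> {1..m}" using that by simp
    obtain Zs where "is_path_decomp (Gs i) Zs" "xs i \<in> hd Zs" "pd_width Zs = pw_rooted (Gs i) (xs i)"
      using pw_opt(1)[OF triv[OF assms(3)[OF i1] xsV(1)[OF i1]]] by blast
    then show ?thesis using assms(7)[OF that] by auto
  qed
  define w where "w = pw_rooted B (xs 1)"
  define q where "q = pw_rooted (Gs 1) (xs 1)"
  have Ybag: "int (card X) \<le> w + 1" if "X \<in> set Y" for X using pd_width_ge[OF that] Y(3) w_def by simp
  have Wbag: "int (card X) \<le> q + 1" if "X \<in> set W" for X using pd_width_ge[OF that] W(3) q_def by simp
  have Y0: "Y \<noteq> []" using Y(1) pd_iff by blast
  have w0: "w \<ge> 0"
  proof -
    have hY: "hd Y \<in> set Y" using Y0 by simp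
    have "hd Y \<subseteq> VB" using Y(1) hY unfolding pd_iff VB_def by blast
    then have "finite (hd Y)" using finB finite_subset by blast
    then have "card (hd Y) > 0" using Y(2) card_gt_0_iff by blast
    then show ?thesis using Ybag[OF hY] by simp
  qed
  have p0: "p \<ge> 0"
  proof -
    have two: "2 \<in> {2..m}" "2 \<in> {1..m}" using assms(1) by auto
    obtain Zs where Z: "is_path_decomp (Gs 2) Zs" "xs 2 \<in> hd Zs" "pd_width Zs \<le> p" using Zex[OF two(1)] by blast
    have Z0: "Zs \<noteq> []" using Z(1) pd_iff by blast
    have hZ: "hd Zs \<in> set Zs" using Z0 by simp
    have "hd Zs \<subseteq> verts (Gs 2)" using Z(1) hZ unfolding pd_iff by blast
    then have "finite (hd Zs)" using finG[OF two(2)] finite_subset by blast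
    then have "card (hd Zs) > 0" using Z(2) card_gt_0_iff by blast
    then show ?thesis using pd_width_ge[OF hZ] Z(3) by simp
  qed
  define H where "H n = (VB \<union> (\<Union>i\<in>{2..n}. verts (Gs i)), EB \<union> (\<Union>i\<in>{2..n}. edges (Gs i)))" for n
  define Vs where "Vs n = VB - {x} - xs ` {2..n}" for n
  define K where "K = nat (w + 2)"
  define Inv where "Inv n L \<longleftrightarrow> is_path_decomp (H n) L \<and> (\<forall>X\<in>set L. x \<in> X) \<and> xs 1 \<in> last L \<and>
      (\<forall>X\<in>set L. int (card X) \<le> w + p + 2) \<and> goodr (Vs n) {} K L" for n L
  have HV: "verts (H n) = VB \<union> (\<Union>i\<in>{2..n}. verts (Gs i))" for n by (simp add: H_def verts_def)
  have HE: "edges (H n) = EB \<union> (\<Union>i\<in>{2..n}. edges (Gs i))" for n by (simp add: H_def edges_def)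
  have finH: "finite (verts (H n))" if "n \<le> m" for n
    unfolding HV using finB finG that by auto
  have main: "1 \<le> n \<Longrightarrow> n \<le> m \<Longrightarrow> \<exists>L. Inv n L" for n
  proof (induction n)
    case 0 then show ?case by simp
  next
    case (Suc n)
    show ?case
    proof (cases "n = 0")
      case True
      define L where "L = map (\<lambda>Z. {x} \<union> Z) (rev Y)"
      have HVs: "verts (H (Suc n)) = VB" "edges (H (Suc n)) = EB" using True by (simp_all add: HV HE)
      have YU: "\<Union>(set Y) = VB" using Y(1) unfolding pd_iff VB_def by blast
      have xVB: "x \<in> VB" using assms(8) VB_def by simp
      have L0: "L \<noteq> []" using Y0 L_def by simp
      have LU: "\<Union>(set L) = VB" unfolding L_def using Union_map_Un[of "rev Y" "{x}"] Y0 YU xVB by auto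
      have cL: "conn L" unfolding L_def by (rule conn_map_Un[OF conn_rev]) (use Y(1) pd_iff in blast)
      have LE: "\<forall>e\<in>EB. \<exists>X\<in>set L. e \<subseteq> X"
      proof
        fix e assume "e \<in> EB"
        then obtain X where "X \<in> set Y" "e \<subseteq> X" using Y(1) unfolding pd_iff EB_def by blast
        then show "\<exists>X\<in>set L. e \<subseteq> X" unfolding L_def by auto
      qed
      have pd: "is_path_decomp (H (Suc n)) L" unfolding pd_iff HVs using L0 LU cL LE by blast
      have xall: "\<forall>X\<in>set L. x \<in> X" unfolding L_def by auto
      have last: "xs 1 \<in> last L" unfolding L_def using Y0 Y(2) by (simp add: last_map last_rev)
      have cardL: "\<forall>X\<in>set L. int (card X) \<le> w + 2"
      proof
        fix X assume "X \<in> set L"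
        then obtain Z where Z: "Z \<in> set Y" "X = {x} \<union> Z" unfolding L_def by auto
        have "card X \<le> card {x} + card Z" unfolding Z(2) by (rule card_Un_le)
        then show "int (card X) \<le> w + 2" using Ybag[OF Z(1)] by simp
      qed
      have "goodr (Vs (Suc n)) {} K L" by (rule goodr_all) (use cardL K_def in auto)
      then have "Inv (Suc n) L" unfolding Inv_def using pd xall last cardL p0 by auto
      then show ?thesis by blast
    next
      case False
      define i where "i = Suc n"
      have i2: "i \<in> {2..m}" and i1: "i \<in> {1..m}" using False Suc.prems i_def by auto
      obtain L where IL: "Inv n L" using Suc False by auto
      have Lpd: "is_path_decomp (H n) L" and xall: "\<forall>X\<in>set L. x \<in> X" and lastL: "xs 1 \<in> last L"
        and cardL: "\<forall>X\<in>set L. int (card X) \<le> w + p + 2" and gL: "goodr (Vs n) {} K L"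
        using IL unfolding Inv_def by auto
      obtain Zs where Z: "is_path_decomp (Gs i) Zs" "xs i \<in> hd Zs" "pd_width Zs \<le> p" using Zex[OF i2] by blast
      define Vi where "Vi = verts (Gs i)"
      have Z0: "Zs \<noteq> []" and ZU: "\<Union>(set Zs) = Vi" and cZ: "conn Zs"
        and ZE: "\<forall>e\<in>edges (Gs i). \<exists>X\<in>set Zs. e \<subseteq> X" using Z(1) unfolding pd_iff Vi_def by auto
      have disjj: "verts (Gs j) \<inter> Vi = {}" if "j \<in> {2..n}" for j
        using assms(5)[of j i] that i_def Suc.prems Vi_def by auto
      have disj: "verts (H n) \<inter> Vi = {xs i}"
        using capB[OF i1] disjj unfolding HV Vi_def by blast
      have LU: "\<Union>(set L) = verts (H n)" and L0: "L \<noteq> []" and cL: "conn L"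
        and LE: "\<forall>e\<in>edges (H n). \<exists>X\<in>set L. e \<subseteq> X" using Lpd unfolding pd_iff by auto
      have xiL: "xs i \<in> \<Union>(set L)" using xsV(2)[OF i1] LU HV by auto
      obtain A C where AC: "L = A @ C" "C \<noteq> []" "xs i \<in> hd C" "xs i \<notin> \<Union>(set A)"
        using split_first[OF xiL] by blast
      define S where "S = (if A = [] then {x} else last A \<inter> hd C)"
      define M where "M = map (\<lambda>Z. S \<union> Z) (rev Zs)"
      define L' where "L' = A @ M @ C"
      have hdC: "hd C \<in> set L" using AC by simp
      have lastA: "last A \<in> set L" if "A \<noteq> []" using AC that by simp
      have SC: "S \<subseteq> hd C" using xall hdC S_def by auto
      have xS: "x \<in> S" using xall hdC lastA S_def by auto
      have AU: "\<Union>(set A) \<subseteq> verts (H n)" and CU: "\<Union>(set C) \<subseteq> verts (H n)" using LU AC by auto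
      have AZ: "\<Union>(set A) \<inter> \<Union>(set Zs) = {}"
      proof (rule ccontr)
        assume "\<Union>(set A) \<inter> \<Union>(set Zs) \<noteq> {}"
        then obtain v where v: "v \<in> \<Union>(set A)" "v \<in> \<Union>(set Zs)" by blast
        then have "v \<in> verts (H n) \<inter> Vi" using AU ZU by blast
        then have "v = xs i" using disj by blast
        then show False using v AC(4) by blast
      qed
      have ZC: "\<Union>(set Zs) \<inter> \<Union>(set C) \<subseteq> hd Zs \<inter> hd C"
      proof
        fix v assume v: "v \<in> \<Union>(set Zs) \<inter> \<Union>(set C)"
        then have "v \<in> verts (H n) \<inter> Vi" using CU ZU by blast
        then have "v = xs i" using disj by blast
        then show "v \<in> hd Zs \<inter> hd C" using Z(2) AC(3) by blast
      qed
      have cL': "conn L'" unfolding L'_def M_def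
        by (rule insert_conn[OF _ AC(2) cZ Z0 SC]) (use cL AC S_def AZ ZC in auto)
      have M0: "M \<noteq> []" using Z0 M_def by simp
      have MU: "\<Union>(set M) = S \<union> Vi" unfolding M_def using Union_map_Un[of "rev Zs" S] Z0 ZU by simp
      have Hsuc: "{2..Suc n} = insert (Suc n) {2..n}" using False by auto
      have HVs: "verts (H (Suc n)) = verts (H n) \<union> Vi" unfolding HV Hsuc Vi_def i_def by auto
      have HEs: "edges (H (Suc n)) = edges (H n) \<union> edges (Gs i)" unfolding HE Hsuc i_def by auto
      have L'U: "\<Union>(set L') = verts (H (Suc n))"
      proof -
        have "S \<subseteq> verts (H n)" using SC hdC LU by blast
        then show ?thesis unfolding HVs L'_def using MU AC LU by auto
      qed
      have L'E: "\<forall>e\<in>edges (H (Suc n)). \<exists>X\<in>set L'. e \<subseteq> X"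
      proof
        fix e assume "e \<in> edges (H (Suc n))"
        then consider "e \<in> edges (H n)" | "e \<in> edges (Gs i)" unfolding HEs by blast
        then show "\<exists>X\<in>set L'. e \<subseteq> X"
        proof cases
          case 1 then obtain X where "X \<in> set L" "e \<subseteq> X" using LE by blast
          then show ?thesis unfolding L'_def using AC by auto
        next
          case 2 then obtain X where X: "X \<in> set Zs" "e \<subseteq> X" using ZE by blast
          have "S \<union> X \<in> set L'" unfolding L'_def M_def using X(1) by auto
          then show ?thesis using X(2) by blast
        qed
      qed
      have pd: "is_path_decomp (H (Suc n)) L'" unfolding pd_iff using L'U L'E cL' L'_def AC(2) by auto
      have xall': "\<forall>X\<in>set L'. x \<in> X" unfolding L'_def M_def using xall AC xS by auto
      have last': "xs 1 \<in> last L'" unfolding L'_def using lastL AC by simp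
      have fhC: "finite (hd C)"
      proof -
        have "finite (verts (H n))" using finH[of n] Suc.prems by simp
        moreover have "hd C \<subseteq> verts (H n)" using hdC LU by blast
        ultimately show ?thesis using finite_subset by blast
      qed
      have gAC: "goodr (Vs n) {} K A" "goodr (Vs n) (if A = [] then {} else last A) K C"
        using gL unfolding AC(1) goodr_append by auto
      have cS: "int (card S) \<le> w + 1"
      proof (cases "A = []")
        case True then show ?thesis using S_def w0 by simp
      next
        case Ane: False
        have xlA: "x \<in> last A" using xall lastA[OF Ane] by blast
        have "last A \<in> set A" using Ane by simp
        then have xix: "xs i \<noteq> x" "xs i \<notin> last A" using AC(4) xlA by auto
        have "xs i \<notin> xs ` {2..n}"
        proof
          assume "xs i \<in> xs ` {2..n}"
          then obtain j where j: "j \<in> {2..n}" "xs i = xs j" by blast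
          have "xs j \<in> verts (Gs j)" using xsV(1)[of j] j Suc.prems by auto
          then show False using disjj[OF j(1)] j(2) xsV(1)[OF i1] Vi_def by auto
        qed
        then have "xs i \<in> Vs n" unfolding Vs_def using xsV(2)[OF i1] xix by auto
        then have "(hd C - last A) \<inter> Vs n \<noteq> {}" using AC(3) xix by blast
        moreover have "goodr (Vs n) (last A) K (hd C # tl C)" using gAC(2) Ane AC(2) by simp
        ultimately have cK: "card (hd C) \<le> K" by simp
        have SS: "S \<subseteq> hd C - {xs i}" using S_def Ane xix by auto
        have c1: "card S \<le> card (hd C - {xs i})" using fhC SS by (intro card_mono) auto
        have c2: "card (hd C - {xs i}) = card (hd C) - 1" using fhC AC(3) by simp
        have c3: "card (hd C) > 0" using fhC AC(3) card_gt_0_iff by blast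
        have cK': "int (card (hd C)) \<le> w + 2" using cK K_def w0 by simp
        have c2': "int (card (hd C - {xs i})) = int (card (hd C)) - 1" using c2 c3 by simp
        show ?thesis using c1 c2' cK' by linarith
      qed
      have cardL': "\<forall>X\<in>set L'. int (card X) \<le> w + p + 2"
      proof
        fix X assume "X \<in> set L'"
        then consider "X \<in> set L" | "X \<in> set M" unfolding L'_def using AC by auto
        then show "int (card X) \<le> w + p + 2"
        proof cases
          case 1 then show ?thesis using cardL by blast
        next
          case 2
          then obtain Z where Zm: "Z \<in> set Zs" "X = S \<union> Z" unfolding M_def by auto
          have "card X \<le> card S + card Z" unfolding Zm(2) by (rule card_Un_le)
          moreover have "int (card Z) \<le> p + 1" using pd_width_ge[OF Zm(1)] Z(3) by simp
          ultimately show ?thesis using cS by linarith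
        qed
      qed
      have VsS: "Vs (Suc n) = Vs n - {xs i}" unfolding Vs_def Hsuc i_def by auto
      define P0 where "P0 = (if A = [] then {} else last A)"
      have g1: "goodr (Vs (Suc n)) {} K A" by (rule goodr_mono_Vs[OF gAC(1)]) (use VsS in auto)
      have g2: "goodr (Vs (Suc n)) P0 K M" unfolding M_def
      proof (rule goodr_mapUn)
        show "(S - P0) \<inter> Vs (Suc n) = {}" using S_def P0_def Vs_def by auto
        show "\<forall>Z\<in>set (rev Zs). Z \<inter> Vs (Suc n) = {}"
        proof
          fix Z assume "Z \<in> set (rev Zs)"
          then have "Z \<subseteq> Vi" using ZU by auto
          then show "Z \<inter> Vs (Suc n) = {}" using capB[OF i1] VsS Vi_def unfolding Vs_def VB_def by auto
        qed
      qed
      have lM: "last M = S \<union> hd Zs" unfolding M_def using Z0 by (simp add: last_map last_rev)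
      have g3: "goodr (Vs (Suc n)) (last M) K C"
      proof -
        have "goodr (Vs n) P0 K (hd C # tl C)" using gAC(2) AC(2) P0_def by simp
        moreover have "hd C \<inter> P0 \<subseteq> last M" unfolding lM P0_def S_def by auto
        ultimately have "goodr (Vs n) (last M) K (hd C # tl C)" by (rule goodr_mono_hd)
        then have "goodr (Vs (Suc n)) (last M) K (hd C # tl C)" by (rule goodr_mono_Vs) (use VsS in auto)
        then show ?thesis using AC(2) by simp
      qed
      have "goodr (Vs (Suc n)) {} K L'"
        unfolding L'_def goodr_append using g1 g2 g3 M0 P0_def by auto
      then have "Inv (Suc n) L'" unfolding Inv_def using pd xall' last' cardL' by auto
      then show ?thesis by blast
    qed
  qed
  obtain L where IL: "Inv m L" using main[of m] assms(1) by auto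
  have Lpd: "is_path_decomp (H m) L" and xall: "\<forall>X\<in>set L. x \<in> X" and lastL: "xs 1 \<in> last L"
    and cardL: "\<forall>X\<in>set L. int (card X) \<le> w + p + 2"
    using IL unfolding Inv_def by auto
  have LU: "\<Union>(set L) = verts (H m)" and L0: "L \<noteq> []" and cL: "conn L"
    and LE: "\<forall>e\<in>edges (H m). \<exists>X\<in>set L. e \<subseteq> X" using Lpd unfolding pd_iff by auto
  have WU: "\<Union>(set W) = verts (Gs 1)" and W0: "W \<noteq> []" and cW: "conn W"
    and WE: "\<forall>e\<in>edges (Gs 1). \<exists>X\<in>set W. e \<subseteq> X" using W(1) unfolding pd_iff by auto
  define F where "F = L @ W"
  have m12: "{1..m} = insert 1 {2..m}" using assms(1) by auto
  have GV0: "verts G = VB \<union> (\<Union>i\<in>{1..m}. verts (Gs i))"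
    unfolding assms(4) graph_union_def graph_Union_def VB_def by (simp add: verts_def)
  have GV: "verts G = verts (H m) \<union> verts (Gs 1)"
    unfolding GV0 HV m12 by auto
  have GE0: "edges G = EB \<union> (\<Union>i\<in>{1..m}. edges (Gs i))"
    unfolding assms(4) graph_union_def graph_Union_def EB_def by (simp add: edges_def)
  have GE: "edges G = edges (H m) \<union> edges (Gs 1)"
    unfolding GE0 HE m12 by auto
  have disj1: "verts (H m) \<inter> verts (Gs 1) = {xs 1}"
  proof -
    have "verts (Gs j) \<inter> verts (Gs 1) = {}" if "j \<in> {2..m}" for j using assms(5)[of j 1] that by auto
    then show ?thesis using capB[OF m1] unfolding HV by blast
  qed
  have "\<Union>(set L) \<inter> \<Union>(set W) \<subseteq> last L \<inter> hd W"
    unfolding LU WU disj1 using lastL W(2) by blast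
  then have cF: "conn F" unfolding F_def by (rule conn_append[OF cL cW L0 W0])
  have FE: "\<forall>e\<in>edges G. \<exists>X\<in>set F. e \<subseteq> X"
  proof
    fix e assume "e \<in> edges G"
    then consider "e \<in> edges (H m)" | "e \<in> edges (Gs 1)" unfolding GE by blast
    then show "\<exists>X\<in>set F. e \<subseteq> X"
    proof cases
      case 1 then obtain X where "X \<in> set L" "e \<subseteq> X" using LE by blast
      then show ?thesis unfolding F_def by auto
    next
      case 2 then obtain X where "X \<in> set W" "e \<subseteq> X" using WE by blast
      then show ?thesis unfolding F_def by auto
    qed
  qed
  have FU: "\<Union>(set F) = verts G" unfolding F_def GV using LU WU by simp
  have F0: "F \<noteq> []" using L0 F_def by simp
  have pdF: "is_path_decomp G F" unfolding pd_iff using cF FE FU F0 by blast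
  have xF: "x \<in> hd F" using xall L0 F_def by simp
  have "pw_rooted G x \<le> pd_width F" by (rule pw_opt(2)) (use pdF xF in auto)
  also have "pd_width F \<le> max (w + p + 1) q"
  proof (rule pd_width_le)
    show "F \<noteq> []" using L0 F_def by simp
    show "\<forall>X\<in>set F. int (card X) \<le> max (w + p + 1) q + 1"
    proof
      fix X assume "X \<in> set F"
      then consider "X \<in> set L" | "X \<in> set W" unfolding F_def by auto
      then show "int (card X) \<le> max (w + p + 1) q + 1"
      proof cases
        case 1 then have "int (card X) \<le> w + p + 2" using cardL by blast
        then show ?thesis by linarith
      next
        case 2 then have "int (card X) \<le> q + 1" using Wbag by blast
        then show ?thesis by linarith
      qed
    qed
  qed
  finally show ?thesis unfolding w_def q_def by simp
qed

end
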